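(* Let $(\mathbb{X},d,\mu)$ be a proper metric measure space satisfying the $\delta$-annular decay property for some $\delta\in(0,1]$ with constant $D_\delta\geq1$. Let $\varrho$ be a continuous admissible radius function in a bounded domain $\Omega\subset\mathbb{X}$. Then there is a constant $C=C(D_\delta,\mu)>0$ such that for every $u\in L^\infty(\Omega)$, every compact $K\subset\Omega$, all $x,y\in K$ and every $n\in\mathbb{N}$, $$|\mathcal{M}^nu(x)-\mathcal{M}^nu(y)|\leq\|u\|_\infty\,\mathcal{W}_{\mu,K}(d(x,y)),\qquad \mathcal{W}_{\mu,K}(t)=C\,\varrho_K^{-\delta}\left(\widehat\omega_\varrho(t)\right)^\delta,\ t\in[0,\mathrm{diam}\,\Omega].$$ In particular, the sequence $\{\mathcal{M}^nu\}_n$ is locally uniformly equicontinuous in $\Omega$.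
   Context: A metric space is proper if closed bounded sets are compact. A metric measure space $(\mathbb{X},d,\mu)$ is a metric space with a positive Borel regular measure $\mu$ with $0<\mu(B)<\infty$ for every ball $B$. It satisfies the $\delta$-annular decay property if there is $D_\delta\geq1$ with $\mu(B(x,R)\setminus B(x,r))\leq D_\delta\left(\frac{R-r}{R}\right)^\delta\mu(B(x,R))$ for all $x$, $0<r\leq R$. An admissible radius function in $\Omega$ is $\varrho\in C(\overline\Omega)$, $\varrho\ge0$, with $0<\varrho(x)\leq\mathrm{dist}(x,\partial\Omega)$ for $x\in\Omega$ and $\varrho=0$ exactly on $\partial\Omega$. $\varrho_K=\inf_K\varrho$. $B_x=\overline{B}(x,\varrho(x))$, $\mathcal{M}u(x)=\frac{1}{\mu(B_x)}\int_{B_x}u\,d\mu$, $\mathcal{M}^n$ its $n$-th iterate. A modulus of continuity is a nondecreasing continuous $\omega:[0,\mathrm{diam}\,\Omega]\to[0,\infty)$ with $\omega(0)=0$. Fix a concave modulus of continuity $\omega_{\varrho,\Omega}$ for $\varrho$ on $\Omega$ (i.e. $|\varrho(x)-\varrho(y)|\le\omega_{\varrho,\Omega}(d(x,y))$) with $\omega_{\varrho,\Omega}(\mathrm{diam}\,\Omega)\le\mathrm{diam}\,\Omega$. Define $\widehat\omega_\varrho(t)=t$ if $\omega_{\varrho,\Omega}(t)\le t$ for all $t\in[0,\mathrm{diam}\,\Omega]$, and otherwise $\widehat\omega_\varrho(t)=\frac{\mathrm{diam}\,\Omega}{\omega_{\varrho,\Omega}(\mathrm{diam}\,\Omega)}\,\omega_{\varrho,\Omega}(t)$.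 A sequence is locally uniformly equicontinuous in $\Omega$ if it is uniformly equicontinuous on each compact $K\subset\Omega$. *)

theory Defs
  imports "HOL-Analysis.Analysis" "HOL-Probability.Essential_Supremum"
begin

definition proper_space :: "'a::metric_space itself \<Rightarrow> bool" where
  "proper_space _ \<longleftrightarrow> (\<forall>S::'a set. closed S \<and> bounded S \<longrightarrow> compact S)"

definition mm_space :: "'a::metric_space measure \<Rightarrow> bool" where
  "mm_space M \<longleftrightarrow> sets M = sets borel \<and>
     (\<forall>x r. 0 < r \<longrightarrow> 0 < emeasure M (ball x r) \<and> emeasure M (ball x r) < \<infinity>)"

definition annular_decay :: "'a::metric_space measure \<Rightarrow> real \<Rightarrow> real \<Rightarrow> bool" where
  "annular_decay M \<delta> D \<longleftrightarrow> D \<ge> 1 \<and>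
     (\<forall>x r R. 0 < r \<and> r \<le> R \<longrightarrow>
        measure M (ball x R - ball x r) \<le> D * ((R - r) / R) powr \<delta> * measure M (ball x R))"

definition bounded_domain :: "'a::metric_space set \<Rightarrow> bool" where
  "bounded_domain \<Omega> \<longleftrightarrow> open \<Omega> \<and> connected \<Omega> \<and> \<Omega> \<noteq> {} \<and> bounded \<Omega>"

text \<open>Admissible radius function; dist(x, boundary) written out as a bound by all boundary distances.\<close>
definition admissible_radius :: "'a::metric_space set \<Rightarrow> ('a \<Rightarrow> real) \<Rightarrow> bool" where
  "admissible_radius \<Omega> \<rho> \<longleftrightarrow> continuous_on (closure \<Omega>) \<rho> \<and>
     (\<forall>x\<in>closure \<Omega>. 0 \<le> \<rho> x) \<and>
     (\<forall>x\<in>\<Omega>. 0 < \<rho> x \<and> (\<forall>z\<in>frontier \<Omega>. \<rho> x \<le> dist x z)) \<and>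
     (\<forall>x\<in>closure \<Omega>. \<rho> x = 0 \<longleftrightarrow> x \<in> frontier \<Omega>)"

definition modulus_of_continuity :: "real \<Rightarrow> (real \<Rightarrow> real) \<Rightarrow> bool" where
  "modulus_of_continuity L \<omega> \<longleftrightarrow> mono_on {0..L} \<omega> \<and> continuous_on {0..L} \<omega> \<and> \<omega> 0 = 0 \<and>
     (\<forall>t\<in>{0..L}. 0 \<le> \<omega> t)"

text \<open>The normalized modulus \<open>\<omega>\<close>-hat, with L = diam \<Omega>.\<close>
definition omega_hat :: "real \<Rightarrow> (real \<Rightarrow> real) \<Rightarrow> real \<Rightarrow> real" where
  "omega_hat L \<omega> t = (if \<forall>s\<in>{0..L}. \<omega> s \<le> s then t else L / \<omega> L * \<omega> t)"

text \<open>Averaging operator over the closed ball B_x = cball x (\<rho> x); the L^\<infinity>(\<Omega>) function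
  is integrated over B_x \<inter> \<Omega> (i.e. extended by zero outside \<Omega>).\<close>
definition avg_op :: "'a::metric_space measure \<Rightarrow> 'a set \<Rightarrow> ('a \<Rightarrow> real) \<Rightarrow> ('a \<Rightarrow> real) \<Rightarrow> 'a \<Rightarrow> real" where
  "avg_op M \<Omega> \<rho> u x = (LINT z:(cball x (\<rho> x) \<inter> \<Omega>)|M. u z) / measure M (cball x (\<rho> x))"

definition Linf_norm :: "'a::metric_space measure \<Rightarrow> 'a set \<Rightarrow> ('a \<Rightarrow> real) \<Rightarrow> ereal" where
  "Linf_norm M \<Omega> u = esssup (restrict_space M \<Omega>) (\<lambda>z. ereal \<bar>u z\<bar>)"

end

theory Submission
  imports Defs
begin


lemma alg:
  fixes a b Ix Iy A \<Delta> :: real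
  assumes "0 < a" "0 < b" "\<bar>Ix - Iy\<bar> \<le> A * \<Delta>" "\<bar>Iy\<bar> \<le> A * b" "\<bar>b - a\<bar> \<le> \<Delta>" "0 \<le> A"
  shows "\<bar>Ix / a - Iy / b\<bar> \<le> 2 * A * \<Delta> / a"
proof -
  have e: "Ix / a - Iy / b = (Ix - Iy) / a + (Iy * (b - a) / b) / a"
    using assms by (simp add: field_simps)
  have 1: "\<bar>(Ix - Iy) / a\<bar> \<le> A * \<Delta> / a" using assms by (simp add: abs_div divide_right_mono)
  have "\<bar>Iy * (b - a) / b\<bar> = \<bar>Iy\<bar> * \<bar>b - a\<bar> / b" using assms by (simp add: abs_mult)
  also have "\<dots> \<le> (A * b) * \<Delta> / b" using assms
    by (intro divide_right_mono mult_mono) auto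
  also have "\<dots> = A * \<Delta>" using assms by simp
  finally have h: "\<bar>Iy * (b - a) / b\<bar> \<le> A * \<Delta>" .
  have "\<bar>(Iy * (b - a) / b) / a\<bar> = \<bar>Iy * (b - a) / b\<bar> / a" using assms by (simp only: abs_divide)
  also have "\<dots> \<le> A * \<Delta> / a" using h assms by (intro divide_right_mono) auto
  finally have "\<bar>(Iy * (b - a) / b) / a\<bar> \<le> A * \<Delta> / a" .
  with 1 e have "\<bar>Ix / a - Iy / b\<bar> \<le> A * \<Delta> / a + A * \<Delta> / a" by linarith
  then show ?thesis by simp
qed

locale andec =
  fixes M :: "'a::metric_space measure" and \<delta> D :: real
  assumes mm: "mm_space M" and dpos: "0 < \<delta>" and dle: "\<delta> \<le> 1" and ann: "annular_decay M \<delta> D"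
begin

lemma sets_M: "sets M = sets borel" using mm by (simp add: mm_space_def)
lemma space_M: "space M = UNIV" using sets_eq_imp_space_eq[OF sets_M] by simp
lemma open_sets[measurable]: "open S \<Longrightarrow> S \<in> sets M" by (simp add: sets_M)
lemma closed_sets[measurable]: "closed S \<Longrightarrow> S \<in> sets M" by (simp add: sets_M)
lemma ball_sets[measurable]: "ball x r \<in> sets M" by (simp add: sets_M)
lemma cball_sets[measurable]: "cball x r \<in> sets M" by (simp add: sets_M)
lemma Dge1: "D \<ge> 1" using ann by (simp add: annular_decay_def)

lemma fin_bounded: assumes "S \<in> sets M" "bounded S" shows "emeasure M S < \<infinity>"
proof -
  obtain x r where "S \<subseteq> ball x r" "0 < r"
    using assms(2) by (metis bounded_subset_ballD)
  then have "emeasure M S \<le> emeasure M (ball x r)" by (intro emeasure_mono) auto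
  also have "\<dots> < \<infinity>" using mm \<open>0<r\<close> by (simp add: mm_space_def)
  finally show ?thesis .
qed

lemma fmeas_bounded: "S \<in> sets M \<Longrightarrow> bounded S \<Longrightarrow> S \<in> fmeasurable M"
  using fin_bounded by (simp add: fmeasurable_def)

lemma ball_pos: "0 < r \<Longrightarrow> 0 < measure M (ball x r)"
  using mm unfolding mm_space_def measure_def
  by (auto simp: enn2real_positive_iff)

lemma cball_pos: "0 < r \<Longrightarrow> 0 < measure M (cball x r)"
proof -
  assume r: "0 < r"
  have "measure M (ball x r) \<le> measure M (cball x r)"
    by (intro measure_mono_fmeasurable fmeas_bounded) auto
  with ball_pos[OF r, of x] show ?thesis by linarith
qed

lemma annular: "0 < r \<Longrightarrow> r \<le> R \<Longrightarrow>
   measure M (ball x R - ball x r) \<le> D * ((R - r) / R) powr \<delta> * measure M (ball x R)"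
  using ann by (simp add: annular_decay_def)

definition \<theta> where "\<theta> = (1 / (2*D)) powr (1/\<delta>)"

lemma theta: "0 < \<theta>" "\<theta> \<le> 1/2" "D * \<theta> powr \<delta> = 1/2"
proof -
  show "0 < \<theta>" using Dge1 by (simp add: \<theta>_def)
  have "\<theta> powr \<delta> = 1/(2*D)" using Dge1 dpos by (simp add: \<theta>_def powr_powr)
  then show "D * \<theta> powr \<delta> = 1/2" using Dge1 by simp
  have "\<theta> \<le> (1/2) powr (1/\<delta>)" unfolding \<theta>_def using Dge1 dpos
    by (intro powr_mono2) (auto simp: field_simps)
  also have "\<dots> \<le> (1/2) powr 1" using dpos dle
    by (intro powr_mono') (auto simp: field_simps)
  finally show "\<theta> \<le> 1/2" by simp
qed

lemma doubling: assumes "0 < R" shows "measure M (ball x R) \<le> 2 * measure M (ball x ((1-\<theta>)*R))"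
proof -
  have t: "0<\<theta>" "\<theta> \<le> 1/2" "D * \<theta> powr \<delta> = 1/2" using theta by auto
  have r: "0 < (1-\<theta>)*R" "(1-\<theta>)*R \<le> R" using t assms by auto
  have "(R - (1-\<theta>)*R)/R = \<theta>" using assms by (simp add: field_simps)
  with annular[OF r, of x] t have a: "measure M (ball x R - ball x ((1-\<theta>)*R)) \<le> 1/2 * measure M (ball x R)"
    by simp
  have "measure M (ball x R) = measure M (ball x R - ball x ((1-\<theta>)*R)) + measure M (ball x ((1-\<theta>)*R))"
    using r fin_bounded[of "ball x R"] by (subst measure_Diff) auto
  with a show ?thesis by linarith
qed

lemma int_le:
  fixes h :: "'a \<Rightarrow> real"
  assumes h: "h \<in> borel_measurable M" and b: "AE z in M. \<bar>h z\<bar> \<le> A * indicator S z"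
    and S: "S \<in> sets M" "emeasure M S < \<infinity>" and A: "0 \<le> A"
  shows "\<bar>integral\<^sup>L M h\<bar> \<le> A * measure M S"
proof -
  have i1: "integrable M (\<lambda>z. A * indicator S z)" using S by auto
  have i2: "integrable M h"
    by (rule Bochner_Integration.integrable_bound[OF i1 h]) (use b A in \<open>auto elim!: eventually_mono simp: indicator_def\<close>)
  have "\<bar>integral\<^sup>L M h\<bar> \<le> (\<integral>z. \<bar>h z\<bar> \<partial>M)" by simp
  also have "\<dots> \<le> (\<integral>z. A * indicator S z \<partial>M)"
    by (intro integral_mono_AE i1 b integrable_abs i2)
  also have "\<dots> = A * measure M S" using S by (simp add: space_M)
  finally show ?thesis .
qed

lemma int_bound:
  fixes g :: "'a \<Rightarrow> real"
  assumes g: "g \<in> borel_measurable M" "AE z in M. \<bar>g z\<bar> \<le> A" "0 \<le> A"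
    and S: "S \<in> sets M" "emeasure M S < \<infinity>"
  shows "\<bar>\<integral>z. indicator S z * g z \<partial>M\<bar> \<le> A * measure M S"
proof (rule int_le)
  show "(\<lambda>z. indicator S z * g z) \<in> borel_measurable M"
    using S g by measurable
qed (use g S in \<open>auto elim!: eventually_mono simp: indicator_def\<close>)

lemma int_diff:
  fixes g :: "'a \<Rightarrow> real"
  assumes g: "g \<in> borel_measurable M" "AE z in M. \<bar>g z\<bar> \<le> A" "0 \<le> A"
    and S: "S \<in> sets M" "bounded S" and T: "T \<in> sets M" "bounded T"
  shows "\<bar>(\<integral>z. indicator S z * g z \<partial>M) - (\<integral>z. indicator T z * g z \<partial>M)\<bar>
     \<le> A * measure M ((S - T) \<union> (T - S))"
proof -
  have fS: "emeasure M S < \<infinity>" and fT: "emeasure M T < \<infinity>" using fin_bounded S T by auto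
  have mS[measurable]: "(\<lambda>z. indicator S z * g z) \<in> borel_measurable M" using S g by measurable
  have mT[measurable]: "(\<lambda>z. indicator T z * g z) \<in> borel_measurable M" using T g by measurable
  have iS: "integrable M (\<lambda>z. indicator S z * g z)"
    by (rule Bochner_Integration.integrable_bound[OF integrable_mult_right[OF integrable_real_indicator[OF S(1) fS], of A] mS])
       (use g in \<open>auto elim!: eventually_mono simp: indicator_def\<close>)
  have iT: "integrable M (\<lambda>z. indicator T z * g z)"
    by (rule Bochner_Integration.integrable_bound[OF integrable_mult_right[OF integrable_real_indicator[OF T(1) fT], of A] mT])
       (use g in \<open>auto elim!: eventually_mono simp: indicator_def\<close>)
  have "(\<integral>z. indicator S z * g z \<partial>M) - (\<integral>z. indicator T z * g z \<partial>M)
      = (\<integral>z. indicator S z * g z - indicator T z * g z \<partial>M)"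
    using iS iT by simp
  also have "\<bar>\<dots>\<bar> \<le> A * measure M ((S - T) \<union> (T - S))"
  proof (rule int_le)
    show "(\<lambda>z. indicator S z * g z - indicator T z * g z) \<in> borel_measurable M"
      using S T g by measurable
  qed (use g S T fin_bounded[of "(S - T) \<union> (T - S)"] in \<open>auto elim!: eventually_mono simp: indicator_def\<close>)
  finally show ?thesis .
qed

lemma annulus:
  assumes r: "0 < k" "k \<le> r1" "k \<le> r2" and s: "s = dist x y + \<bar>r1 - r2\<bar>" "0 < s" "2 * s \<le> \<theta> * r1"
  shows "measure M ((cball x r1 - cball y r2) \<union> (cball y r2 - cball x r1))
     \<le> 6*D*(s/k) powr \<delta> * measure M (cball x r1)"
proof -
  have t: "0<\<theta>" "\<theta> \<le> 1/2" using theta by auto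
  define R where "R = r1 + 2 * s"
  define r0 where "r0 = r1 - s"
  have "\<theta> * r1 \<le> 1/2 * r1" using t r by (intro mult_right_mono) auto
  then have r0: "0 < r0" "r0 \<le> R" using t s r unfolding r0_def R_def by linarith+
  have sub: "(cball x r1 - cball y r2) \<union> (cball y r2 - cball x r1) \<subseteq> ball x R - ball x r0"
  proof
    fix z assume "z \<in> (cball x r1 - cball y r2) \<union> (cball y r2 - cball x r1)"
    then consider "dist x z \<le> r1" "dist y z > r2" | "dist y z \<le> r2" "dist x z > r1"
      by (auto simp: mem_cball not_le)
    moreover have "dist y z \<le> dist x y + dist x z" "dist x z \<le> dist x y + dist y z"
      using dist_triangle[of x z y] dist_triangle[of y z x] dist_commute[of x y] by linarith+
    moreover have "\<bar>r1 - r2\<bar> \<ge> r1 - r2" "\<bar>r1 - r2\<bar> \<ge> r2 - r1" by linarith+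
    ultimately have "dist x z < R \<and> \<not> dist x z < r0"
      using s(1,2) unfolding R_def r0_def by (cases; linarith)
    then show "z \<in> ball x R - ball x r0" by (simp add: mem_ball)
  qed
  have "measure M ((cball x r1 - cball y r2) \<union> (cball y r2 - cball x r1)) \<le> measure M (ball x R - ball x r0)"
    using sub by (intro measure_mono_fmeasurable fmeas_bounded) auto
  also have "\<dots> \<le> D * ((R - r0) / R) powr \<delta> * measure M (ball x R)" by (rule annular[OF r0])
  also have "\<dots> \<le> D * (3 * (s/k) powr \<delta>) * (2 * measure M (cball x r1))"
  proof (intro mult_mono)
    have "(R - r0)/R = (3 * s)/R" by (simp add: R_def r0_def)
    also have "\<dots> \<le> (3 * s)/k" using r s r0 by (intro frac_le) (auto simp: R_def)
    finally have "(R - r0)/R \<le> 3 * (s/k)" by simp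
    then have "((R - r0) / R) powr \<delta> \<le> (3 * (s/k)) powr \<delta>"
      using r0 dpos by (intro powr_mono2) auto
    also have "\<dots> = 3 powr \<delta> * (s/k) powr \<delta>" using r s by (subst powr_mult[symmetric]) auto
    also have "\<dots> \<le> 3 * (s/k) powr \<delta>"
    proof -
      have "3 powr \<delta> \<le> 3 powr (1::real)" using dle by (intro powr_mono) auto
      then show ?thesis by (intro mult_right_mono) auto
    qed
    finally show "((R - r0) / R) powr \<delta> \<le> 3 * (s/k) powr \<delta>" .
    have "measure M (ball x R) \<le> 2 * measure M (ball x ((1-\<theta>)*R))"
      using r0 by (intro doubling) auto
    also have "measure M (ball x ((1-\<theta>)*R)) \<le> measure M (cball x r1)"
    proof (intro measure_mono_fmeasurable fmeas_bounded)
      have "0 \<le> \<theta> * s" using s t by simp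
      moreover have "(1-\<theta>)*R = r1 + 2 * s - \<theta> * r1 - 2 * (\<theta> * s)" unfolding R_def by (simp add: algebra_simps)
      ultimately have "(1-\<theta>)*R \<le> r1" using s(3) by linarith
      then show "ball x ((1-\<theta>)*R) \<subseteq> cball x r1" by auto
    qed auto
    finally show "measure M (ball x R) \<le> 2 * measure M (cball x r1)" by simp
  qed (use Dge1 in auto)
  finally show ?thesis by (simp add: algebra_simps)
qed

definition C0 where "C0 = max (12*D) (4/\<theta>)"

lemma C0_pos: "0 < C0" using Dge1 by (auto simp: C0_def)

lemma core:
  fixes g :: "'a \<Rightarrow> real"
  assumes g: "g \<in> borel_measurable M" "AE z in M. \<bar>g z\<bar> \<le> A" "0 \<le> A"
    and r: "0 < k" "k \<le> r1" "k \<le> r2"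
  shows "\<bar>(\<integral>z. indicator (cball x r1) z * g z \<partial>M) / measure M (cball x r1)
         - (\<integral>z. indicator (cball y r2) z * g z \<partial>M) / measure M (cball y r2)\<bar>
     \<le> C0 * A * ((dist x y + \<bar>r1 - r2\<bar>)/k) powr \<delta>"
proof -
  define s where "s = dist x y + \<bar>r1 - r2\<bar>"
  define a where "a = measure M (cball x r1)"
  define b where "b = measure M (cball y r2)"
  define Ix where "Ix = (\<integral>z. indicator (cball x r1) z * g z \<partial>M)"
  define Iy where "Iy = (\<integral>z. indicator (cball y r2) z * g z \<partial>M)"
  define \<Delta> where "\<Delta> = (cball x r1 - cball y r2) \<union> (cball y r2 - cball x r1)"
  have t: "0<\<theta>" "\<theta> \<le> 1/2" using theta by auto
  have a: "0 < a" unfolding a_def using r by (intro cball_pos) auto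
  have b: "0 < b" unfolding b_def using r by (intro cball_pos) auto
  have fx: "emeasure M (cball x r1) < \<infinity>" "emeasure M (cball y r2) < \<infinity>"
    using fin_bounded[of "cball x r1"] fin_bounded[of "cball y r2"] by auto
  have Ix: "\<bar>Ix\<bar> \<le> A * a" unfolding Ix_def a_def by (rule int_bound[OF g]) (use fx in auto)
  have Iy: "\<bar>Iy\<bar> \<le> A * b" unfolding Iy_def b_def by (rule int_bound[OF g]) (use fx in auto)
  have s0: "0 \<le> s" by (simp add: s_def)
  have C0: "12 * D \<le> C0" "4 / \<theta> \<le> C0" "0 \<le> C0" using Dge1 by (auto simp: C0_def)
  have pw0: "0 \<le> (s/k) powr \<delta>" by simp
  have main: "\<bar>Ix / a - Iy / b\<bar> \<le> C0 * A * (s/k) powr \<delta>"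
  proof (cases "s = 0")
    case True
    then have "dist x y = 0" "\<bar>r1 - r2\<bar> = 0" using zero_le_dist[of x y] abs_ge_zero[of "r1-r2"] unfolding s_def by linarith+
    then have "x = y" "r1 = r2" by auto
    then show ?thesis using True by (simp add: a_def b_def Ix_def Iy_def)
  next
    case False
    then have sp: "0 < s" using s0 by simp
    show ?thesis
    proof (cases "2 * s \<le> \<theta> * r1")
      case True
      have d: "measure M \<Delta> \<le> 6*D*(s/k) powr \<delta> * a"
        unfolding \<Delta>_def a_def by (rule annulus[OF r s_def sp True])
      have dI: "\<bar>Ix - Iy\<bar> \<le> A * measure M \<Delta>"
        unfolding Ix_def Iy_def \<Delta>_def by (rule int_diff[OF g]) auto
      have "\<bar>a - b\<bar> \<le> 1 * measure M \<Delta>"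
        using int_diff[of "\<lambda>_. 1" 1 "cball x r1" "cball y r2"] fx
        unfolding \<Delta>_def a_def b_def by (simp add: space_M)
      then have dab: "\<bar>b - a\<bar> \<le> measure M \<Delta>" by simp
      have "\<bar>Ix / a - Iy / b\<bar> \<le> 2 * A * measure M \<Delta> / a"
        by (rule alg[OF a b dI Iy dab g(3)])
      also have "\<dots> \<le> 2 * A * (6*D*(s/k) powr \<delta> * a) / a"
        using a g(3) d by (intro divide_right_mono mult_left_mono) auto
      also have "\<dots> = (12 * D) * A * (s/k) powr \<delta>" using a by simp
      also have "\<dots> \<le> C0 * A * (s/k) powr \<delta>"
        using C0 g(3) pw0 by (intro mult_right_mono) auto
      finally show ?thesis .
    next
      case False
      have "\<theta> * k \<le> \<theta> * r1" using t r by (intro mult_left_mono) auto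
      then have "\<theta>/2 \<le> s/k" using False r by (simp add: field_simps)
      then have "(\<theta>/2) powr \<delta> \<le> (s/k) powr \<delta>" using t dpos by (intro powr_mono2) auto
      moreover have "(\<theta>/2) powr 1 \<le> (\<theta>/2) powr \<delta>" using t dle dpos by (intro powr_mono') auto
      ultimately have th: "\<theta>/2 \<le> (s/k) powr \<delta>" using t by simp
      have "\<bar>Ix / a - Iy / b\<bar> \<le> \<bar>Ix\<bar> / a + \<bar>Iy\<bar> / b" using a b abs_triangle_ineq4[of "Ix/a" "Iy/b"] by (simp add: abs_divide)
      also have "\<dots> \<le> A * a / a + A * b / b" using a b Ix Iy by (intro add_mono divide_right_mono) auto
      also have "\<dots> = (4/\<theta>) * A * (\<theta>/2)" using a b t by simp
      also have "\<dots> \<le> C0 * A * (s/k) powr \<delta>"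
        using C0 g(3) th t by (intro mult_mono) auto
      finally show ?thesis .
    qed
  qed
  then show ?thesis by (simp add: s_def a_def b_def Ix_def Iy_def)
qed

end

locale andom = andec M \<delta> D for M :: "'a::metric_space measure" and \<delta> D +
  fixes \<Omega> :: "'a set" and \<rho> :: "'a \<Rightarrow> real"
  assumes opn: "open \<Omega>" and rc: "continuous_on \<Omega> \<rho>" and rp: "\<And>x. x \<in> \<Omega> \<Longrightarrow> 0 < \<rho> x"
begin

definition gr :: "('a \<Rightarrow> real) \<Rightarrow> 'a \<Rightarrow> real" where "gr v = (\<lambda>z. indicator \<Omega> z * v z)"

definition good :: "real \<Rightarrow> ('a \<Rightarrow> real) \<Rightarrow> bool" where
  "good A v \<longleftrightarrow> gr v \<in> borel_measurable M \<and> (AE z in M. \<bar>gr v z\<bar> \<le> A)"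

lemma avg_eq: "avg_op M \<Omega> \<rho> v x =
  (\<integral>z. indicator (cball x (\<rho> x)) z * gr v z \<partial>M) / measure M (cball x (\<rho> x))"
  unfolding avg_op_def set_lebesgue_integral_def gr_def
  by (simp add: indicator_inter_arith mult.assoc)

lemma avg_lip:
  assumes "good A v" "0 \<le> A" "0 < k" "k \<le> \<rho> x" "k \<le> \<rho> y"
  shows "\<bar>avg_op M \<Omega> \<rho> v x - avg_op M \<Omega> \<rho> v y\<bar> \<le> C0 * A * ((dist x y + \<bar>\<rho> x - \<rho> y\<bar>)/k) powr \<delta>"
  unfolding avg_eq using assms by (intro core) (auto simp: good_def)

lemma avg_bound:
  assumes "good A v" "0 \<le> A" "0 < \<rho> x"
  shows "\<bar>avg_op M \<Omega> \<rho> v x\<bar> \<le> A"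
proof -
  have a: "0 < measure M (cball x (\<rho> x))" using assms by (intro cball_pos)
  have "\<bar>\<integral>z. indicator (cball x (\<rho> x)) z * gr v z \<partial>M\<bar> \<le> A * measure M (cball x (\<rho> x))"
    using assms fin_bounded[of "cball x (\<rho> x)"] by (intro int_bound) (auto simp: good_def)
  then show ?thesis unfolding avg_eq using a by (simp add: abs_divide divide_le_eq)
qed

lemma avg_cont:
  assumes g: "good A v" "0 \<le> A"
  shows "continuous_on \<Omega> (avg_op M \<Omega> \<rho> v)"
  unfolding continuous_on_eq_continuous_at[OF opn]
proof
  fix x assume x: "x \<in> \<Omega>"
  let ?f = "avg_op M \<Omega> \<rho> v"
  have rx: "0 < \<rho> x" using rp x by auto
  have ic: "isCont \<rho> x" using rc x opn continuous_on_eq_continuous_at by blast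
  then have rt: "(\<rho> \<longlongrightarrow> \<rho> x) (at x)" by (simp add: isCont_def)
  have ev: "eventually (\<lambda>y. \<rho> x / 2 < \<rho> y) (at x)"
    using order_tendstoD(1)[OF rt, of "\<rho> x / 2"] rx by simp
  let ?g = "\<lambda>y. C0 * A * ((dist x y + \<bar>\<rho> x - \<rho> y\<bar>)/(\<rho> x / 2)) powr \<delta>"
  have "eventually (\<lambda>y. norm (?f y - ?f x) \<le> ?g y) (at x)"
    using ev
  proof eventually_elim
    case (elim y)
    have "\<bar>?f x - ?f y\<bar> \<le> ?g y"
      using elim rx by (intro avg_lip[OF g]) auto
    then show ?case by (simp add: abs_minus_commute)
  qed
  moreover have "(?g \<longlongrightarrow> 0) (at x)"
  proof -
    have "((\<lambda>y. dist x y + \<bar>\<rho> x - \<rho> y\<bar>) \<longlongrightarrow> dist x x + \<bar>\<rho> x - \<rho> x\<bar>) (at x)"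
      by (intro tendsto_intros rt)
    then have "((\<lambda>y. (dist x y + \<bar>\<rho> x - \<rho> y\<bar>)/(\<rho> x / 2)) \<longlongrightarrow> 0) (at x)"
      using tendsto_divide[OF _ tendsto_const, of "\<lambda>y. dist x y + \<bar>\<rho> x - \<rho> y\<bar>" 0 _ "\<rho> x / 2"] rx by simp
    then have "((\<lambda>y. ((dist x y + \<bar>\<rho> x - \<rho> y\<bar>)/(\<rho> x / 2)) powr \<delta>) \<longlongrightarrow> 0) (at x)"
      using dpos rx by (intro tendsto_zero_powrI[OF _ tendsto_const]) auto
    then show ?thesis using tendsto_mult_right_zero by blast
  qed
  ultimately have "((\<lambda>y. ?f y - ?f x) \<longlongrightarrow> 0) (at x)" by (rule Lim_null_comparison)
  then have "((\<lambda>y. ?f x + (?f y - ?f x)) \<longlongrightarrow> ?f x + 0) (at x)" by (intro tendsto_add tendsto_const)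
  then show "isCont ?f x" by (simp add: isCont_def)
qed

lemma good_avg:
  assumes g: "good A v" "0 \<le> A"
  shows "good A (avg_op M \<Omega> \<rho> v)"
proof -
  have "(\<lambda>z. indicator \<Omega> z *\<^sub>R avg_op M \<Omega> \<rho> v z) \<in> borel_measurable borel"
    using opn avg_cont[OF g] by (intro borel_measurable_continuous_on_indicator) auto
  moreover have "gr (avg_op M \<Omega> \<rho> v) = (\<lambda>z. indicator \<Omega> z *\<^sub>R avg_op M \<Omega> \<rho> v z)"
    unfolding gr_def by (rule ext) simp
  moreover have "(borel_measurable M :: ('a \<Rightarrow> real) set) = borel_measurable borel"
    by (rule measurable_cong_sets[OF sets_M refl])
  ultimately have m: "gr (avg_op M \<Omega> \<rho> v) \<in> borel_measurable M" by (simp only:)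
  have "\<bar>gr (avg_op M \<Omega> \<rho> v) z\<bar> \<le> A" for z
  proof (cases "z \<in> \<Omega>")
    case True
    have "\<bar>avg_op M \<Omega> \<rho> v z\<bar> \<le> A" by (rule avg_bound[OF g rp[OF True]])
    then show ?thesis using True by (simp add: gr_def)
  next
    case False
    then show ?thesis using g(2) by (simp add: gr_def)
  qed
  with m show ?thesis by (auto simp: good_def)
qed

lemma good_iter:
  assumes g: "good A v" "0 \<le> A"
  shows "good A ((avg_op M \<Omega> \<rho> ^^ m) v)"
  by (induction m) (use g good_avg in auto)


lemma notAE: assumes "\<Omega> \<noteq> {}" shows "\<not> (AE z in M. z \<notin> \<Omega>)"
proof
  assume ae: "AE z in M. z \<notin> \<Omega>"
  have e0: "emeasure M \<Omega> = 0"
    using ae AE_iff_measurable[of \<Omega> M "\<lambda>z. z \<notin> \<Omega>"] opn by (simp add: space_M)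
  moreover obtain x where x: "x \<in> \<Omega>" using assms by auto
  then obtain r where r: "0 < r" "ball x r \<subseteq> \<Omega>" using opn open_contains_ball by blast
  have "0 < emeasure M (ball x r)" using mm r by (simp add: mm_space_def)
  also have "\<dots> \<le> emeasure M \<Omega>" using r opn by (intro emeasure_mono) auto
  finally show False using e0 by simp
qed

lemma good_base:
  assumes u: "u \<in> borel_measurable M" and f: "Linf_norm M \<Omega> u < \<infinity>" and ne: "\<Omega> \<noteq> {}"
  shows "good (real_of_ereal (Linf_norm M \<Omega> u)) u \<and> 0 \<le> real_of_ereal (Linf_norm M \<Omega> u)"
proof -
  define L where "L = Linf_norm M \<Omega> u"
  have "AE z in restrict_space M \<Omega>. ereal \<bar>u z\<bar> \<le> L"
    unfolding L_def Linf_norm_def by (rule esssup_AE)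
  then have ae: "AE z in M. z \<in> \<Omega> \<longrightarrow> ereal \<bar>u z\<bar> \<le> L"
    using opn by (subst (asm) AE_restrict_space_iff) (auto simp: space_M)
  have nae: "\<not> (AE z in M. z \<notin> \<Omega>)" by (rule notAE[OF ne])
  have "L \<noteq> \<infinity>" using f by (simp add: L_def)
  moreover have "L \<noteq> -\<infinity>"
  proof
    assume "L = -\<infinity>"
    then have "AE z in M. z \<notin> \<Omega>" using ae by (auto elim!: eventually_mono)
    with nae show False by simp
  qed
  ultimately obtain r where r: "L = ereal r" by (cases L) auto
  have ae2: "AE z in M. z \<in> \<Omega> \<longrightarrow> \<bar>u z\<bar> \<le> r" using ae r by simp
  have r0: "0 \<le> r"
  proof (rule ccontr)
    assume "\<not> 0 \<le> r"
    then have "AE z in M. z \<notin> \<Omega>" using ae2 by (auto elim!: eventually_mono)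
    with nae show False by simp
  qed
  have m: "gr u \<in> borel_measurable M" unfolding gr_def using u opn by measurable
  have "AE z in M. \<bar>gr u z\<bar> \<le> r" using ae2 r0 by (auto elim!: eventually_mono simp: gr_def indicator_def)
  with m r r0 show ?thesis by (simp add: good_def L_def)
qed

lemma inf_pos:
  assumes K: "compact K" "K \<subseteq> \<Omega>" "K \<noteq> {}"
  shows "0 < (INF z\<in>K. \<rho> z) \<and> (\<forall>z\<in>K. (INF z\<in>K. \<rho> z) \<le> \<rho> z)"
proof -
  have "continuous_on K \<rho>" by (rule continuous_on_subset[OF rc K(2)])
  then obtain z0 where z0: "z0 \<in> K" "\<forall>y\<in>K. \<rho> z0 \<le> \<rho> y"
    using continuous_attains_inf[OF K(1) K(3)] by blast
  have "(INF z\<in>K. \<rho> z) = \<rho> z0" using z0 by (intro cInf_eq_minimum) auto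
  then show ?thesis using z0 rp K by auto
qed

end



lemma omega_hat_ge:
  assumes m: "modulus_of_continuity L \<omega>" and c: "concave_on {0..L} \<omega>" and wL: "\<omega> L \<le> L"
    and t: "0 \<le> t" "t \<le> L"
  shows "t \<le> omega_hat L \<omega> t \<and> \<omega> t \<le> omega_hat L \<omega> t"
proof (cases "\<forall>s\<in>{0..L}. \<omega> s \<le> s")
  case True
  then show ?thesis using t by (simp add: omega_hat_def)
next
  case False
  then obtain s0 where s0: "0 \<le> s0" "s0 \<le> L" "s0 < \<omega> s0" by auto
  have mo: "mono_on {0..L} \<omega>" and w0: "\<omega> 0 = 0" and nn: "\<forall>t\<in>{0..L}. 0 \<le> \<omega> t"
    using m by (auto simp: modulus_of_continuity_def)
  have "\<omega> s0 \<le> \<omega> L" using mo s0 by (auto intro: mono_onD)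
  then have wLp: "0 < \<omega> L" using s0 by linarith
  have Lp: "0 < L" using wLp wL by linarith
  have wt: "0 \<le> \<omega> t" using nn t by auto
  have "\<omega> ((1 - t/L) *\<^sub>R 0 + (t/L) *\<^sub>R L) \<ge> (1 - t/L) * \<omega> 0 + (t/L) * \<omega> L"
    using concave_onD_Icc[OF c, of "t/L"] Lp t by auto
  then have ct: "t/L * \<omega> L \<le> \<omega> t" using Lp w0 by simp
  have od: "omega_hat L \<omega> t = L / \<omega> L * \<omega> t" unfolding omega_hat_def using False by (simp only: if_False)
  have "t \<le> L / \<omega> L * \<omega> t" using ct Lp wLp by (simp add: field_simps)
  moreover have "\<omega> t \<le> L / \<omega> L * \<omega> t"
  proof -
    have "1 \<le> L / \<omega> L" using wL wLp by simp
    then show ?thesis using wt by (metis mult_right_mono mult_1)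
  qed
  ultimately show ?thesis using od by simp
qed

lemma pw_bound:
  fixes k s w \<delta> :: real
  assumes "0 < k" "0 \<le> s" "s \<le> 2 * w" "0 < \<delta>" "\<delta> \<le> 1"
  shows "(s/k) powr \<delta> \<le> 2 * (k powr (-\<delta>) * w powr \<delta>)"
proof -
  have w: "0 \<le> w" using assms by linarith
  have "(s/k) powr \<delta> \<le> ((2*w)/k) powr \<delta>"
    using assms by (intro powr_mono2 divide_right_mono) auto
  also have "\<dots> = 2 powr \<delta> * (k powr (-\<delta>) * w powr \<delta>)"
    using assms w by (simp add: powr_divide powr_mult powr_minus_divide)
  also have "\<dots> \<le> 2 powr 1 * (k powr (-\<delta>) * w powr \<delta>)"
    using assms by (intro mult_right_mono powr_mono) auto
  finally show ?thesis by simp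
qed

lemma small_bound:
  fixes k s \<epsilon> A C0 \<delta> :: real
  assumes "0 < k" "0 < \<epsilon>" "0 \<le> A" "0 \<le> C0" "0 \<le> s" "0 < \<delta>"
    and "s < k * (\<epsilon>/(C0*A+1)) powr (1/\<delta>)"
  shows "C0*A*(s/k) powr \<delta> < \<epsilon>"
proof -
  have p: "0 < C0*A+1" using assms by (simp add: add_nonneg_pos)
  have "s/k < (\<epsilon>/(C0*A+1)) powr (1/\<delta>)" using assms by (simp add: divide_less_eq mult.commute)
  then have "(s/k) powr \<delta> < ((\<epsilon>/(C0*A+1)) powr (1/\<delta>)) powr \<delta>"
    using assms by (intro powr_less_mono2) auto
  also have "\<dots> = \<epsilon>/(C0*A+1)" using assms p by (simp add: powr_powr)
  finally have l: "(s/k) powr \<delta> < \<epsilon>/(C0*A+1)" .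
  have "C0*A*(s/k) powr \<delta> \<le> (C0*A+1)*(s/k) powr \<delta>" by (intro mult_right_mono) auto
  also have "\<dots> < (C0*A+1)*(\<epsilon>/(C0*A+1))" using l p by (intro mult_strict_left_mono) auto
  also have "\<dots> = \<epsilon>" using p by simp
  finally show ?thesis .
qed


theorem theorem3p9:
  fixes M :: "'a::metric_space measure" and \<delta> D :: real
  assumes "proper_space TYPE('a)"
    and "mm_space M"
    and "0 < \<delta>" and "\<delta> \<le> 1"
    and "annular_decay M \<delta> D"
  shows "\<exists>C>0. \<forall>(\<Omega>::'a set) \<rho> \<omega>.
     bounded_domain \<Omega> \<and> admissible_radius \<Omega> \<rho> \<and>
     modulus_of_continuity (diameter \<Omega>) \<omega> \<and> concave_on {0..diameter \<Omega>} \<omega> \<and>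
     \<omega> (diameter \<Omega>) \<le> diameter \<Omega> \<and>
     (\<forall>x\<in>\<Omega>. \<forall>y\<in>\<Omega>. \<bar>\<rho> x - \<rho> y\<bar> \<le> \<omega> (dist x y))
     \<longrightarrow>
     (\<forall>u K x y n. u \<in> borel_measurable M \<and> Linf_norm M \<Omega> u < \<infinity> \<and>
        compact K \<and> K \<subseteq> \<Omega> \<and> x \<in> K \<and> y \<in> K \<and> n \<ge> 1 \<longrightarrow>
        \<bar>((avg_op M \<Omega> \<rho>) ^^ n) u x - ((avg_op M \<Omega> \<rho>) ^^ n) u y\<bar>
          \<le> real_of_ereal (Linf_norm M \<Omega> u) *
             (C * (INF z\<in>K. \<rho> z) powr (-\<delta>) * (omega_hat (diameter \<Omega>) \<omega> (dist x y)) powr \<delta>))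
     \<and>
     (\<forall>u K. u \<in> borel_measurable M \<and> Linf_norm M \<Omega> u < \<infinity> \<and> compact K \<and> K \<subseteq> \<Omega> \<longrightarrow>
        (\<forall>\<epsilon>>0. \<exists>\<eta>>0. \<forall>n\<ge>1. \<forall>x\<in>K. \<forall>y\<in>K. dist x y < \<eta> \<longrightarrow>
           \<bar>((avg_op M \<Omega> \<rho>) ^^ n) u x - ((avg_op M \<Omega> \<rho>) ^^ n) u y\<bar> < \<epsilon>))"
proof -
  interpret andec M \<delta> D by unfold_locales (use assms in auto)
  have C0p: "0 < C0" by (rule C0_pos)
  have C0p2: "0 < 2 * C0" using C0p by simp
  show ?thesis
  proof (rule exI[of _ "2 * C0"], rule conjI[OF C0p2], intro allI impI)
    fix \<Omega> :: "'a set" and \<rho> \<omega>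
    assume H: "bounded_domain \<Omega> \<and> admissible_radius \<Omega> \<rho> \<and>
     modulus_of_continuity (diameter \<Omega>) \<omega> \<and> concave_on {0..diameter \<Omega>} \<omega> \<and>
     \<omega> (diameter \<Omega>) \<le> diameter \<Omega> \<and>
     (\<forall>x\<in>\<Omega>. \<forall>y\<in>\<Omega>. \<bar>\<rho> x - \<rho> y\<bar> \<le> \<omega> (dist x y))"
    then have bd: "open \<Omega>" "bounded \<Omega>" "\<Omega> \<noteq> {}" and ad: "admissible_radius \<Omega> \<rho>"
      and mc: "modulus_of_continuity (diameter \<Omega>) \<omega>" and cc: "concave_on {0..diameter \<Omega>} \<omega>"
      and wL: "\<omega> (diameter \<Omega>) \<le> diameter \<Omega>"
      and rw: "\<forall>x\<in>\<Omega>. \<forall>y\<in>\<Omega>. \<bar>\<rho> x - \<rho> y\<bar> \<le> \<omega> (dist x y)"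
      by (auto simp: bounded_domain_def)
    have rc: "continuous_on \<Omega> \<rho>"
      using ad continuous_on_subset[OF _ closure_subset, of \<Omega> \<rho>] by (auto simp: admissible_radius_def)
    have rp: "\<And>x. x \<in> \<Omega> \<Longrightarrow> 0 < \<rho> x" using ad by (auto simp: admissible_radius_def)
    interpret andom M \<delta> D \<Omega> \<rho> by unfold_locales (use bd rc rp in auto)
    have iter: "(avg_op M \<Omega> \<rho> ^^ n) u = avg_op M \<Omega> \<rho> ((avg_op M \<Omega> \<rho> ^^ (n - 1)) u)"
      if "n \<ge> 1" for n :: nat and u
      using that by (cases n) auto
    have P1: "\<forall>u K x y n. u \<in> borel_measurable M \<and> Linf_norm M \<Omega> u < \<infinity> \<and>
        compact K \<and> K \<subseteq> \<Omega> \<and> x \<in> K \<and> y \<in> K \<and> n \<ge> 1 \<longrightarrow>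
        \<bar>((avg_op M \<Omega> \<rho>) ^^ n) u x - ((avg_op M \<Omega> \<rho>) ^^ n) u y\<bar>
          \<le> real_of_ereal (Linf_norm M \<Omega> u) *
             (2 * C0 * (INF z\<in>K. \<rho> z) powr (-\<delta>) * (omega_hat (diameter \<Omega>) \<omega> (dist x y)) powr \<delta>)"
    proof (intro allI impI, elim conjE)
      fix u K x y and n :: nat
      assume u: "u \<in> borel_measurable M" "Linf_norm M \<Omega> u < \<infinity>" and K: "compact K" "K \<subseteq> \<Omega>"
        and xy: "x \<in> K" "y \<in> K" and n: "n \<ge> 1"
      define A where "A = real_of_ereal (Linf_norm M \<Omega> u)"
      define k where "k = (INF z\<in>K. \<rho> z)"
      define w where "w = omega_hat (diameter \<Omega>) \<omega> (dist x y)"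
      have gA: "good A u" "0 \<le> A" using good_base[OF u bd(3)] by (auto simp: A_def)
      have gv: "good A ((avg_op M \<Omega> \<rho> ^^ (n - 1)) u)" by (rule good_iter[OF gA])
      have kk: "0 < k" "k \<le> \<rho> x" "k \<le> \<rho> y" using inf_pos[OF K] xy unfolding k_def by auto
      have "\<bar>((avg_op M \<Omega> \<rho>) ^^ n) u x - ((avg_op M \<Omega> \<rho>) ^^ n) u y\<bar>
          \<le> C0 * A * ((dist x y + \<bar>\<rho> x - \<rho> y\<bar>)/k) powr \<delta>"
        unfolding iter[OF n] by (rule avg_lip[OF gv gA(2) kk])
      also have "\<dots> \<le> C0 * A * (2 * (k powr (-\<delta>) * w powr \<delta>))"
      proof (intro mult_left_mono pw_bound)
        have dL: "dist x y \<le> diameter \<Omega>" using K xy bd by (intro diameter_bounded_bound) auto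
        have oh: "dist x y \<le> w \<and> \<omega> (dist x y) \<le> w"
          unfolding w_def by (rule omega_hat_ge[OF mc cc wL]) (use dL in auto)
        have "\<bar>\<rho> x - \<rho> y\<bar> \<le> \<omega> (dist x y)" using rw K xy by auto
        then show "dist x y + \<bar>\<rho> x - \<rho> y\<bar> \<le> 2 * w" using oh by linarith
      qed (use kk gA C0p dpos dle in auto)
      also have "\<dots> = A * (2 * C0 * k powr (-\<delta>) * w powr \<delta>)" by simp
      finally show "\<bar>((avg_op M \<Omega> \<rho>) ^^ n) u x - ((avg_op M \<Omega> \<rho>) ^^ n) u y\<bar>
          \<le> real_of_ereal (Linf_norm M \<Omega> u) *
             (2 * C0 * (INF z\<in>K. \<rho> z) powr (-\<delta>) * (omega_hat (diameter \<Omega>) \<omega> (dist x y)) powr \<delta>)"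
        by (simp add: A_def k_def w_def)
    qed
    have P2: "\<forall>u K. u \<in> borel_measurable M \<and> Linf_norm M \<Omega> u < \<infinity> \<and> compact K \<and> K \<subseteq> \<Omega> \<longrightarrow>
        (\<forall>\<epsilon>>0. \<exists>\<eta>>0. \<forall>n\<ge>1. \<forall>x\<in>K. \<forall>y\<in>K. dist x y < \<eta> \<longrightarrow>
           \<bar>((avg_op M \<Omega> \<rho>) ^^ n) u x - ((avg_op M \<Omega> \<rho>) ^^ n) u y\<bar> < \<epsilon>)"
    proof (intro allI impI, elim conjE)
      fix u K and \<epsilon> :: real
      assume u: "u \<in> borel_measurable M" "Linf_norm M \<Omega> u < \<infinity>" and K: "compact K" "K \<subseteq> \<Omega>"
        and e: "0 < \<epsilon>"
      show "\<exists>\<eta>>0. \<forall>n\<ge>1. \<forall>x\<in>K. \<forall>y\<in>K. dist x y < \<eta> \<longrightarrow>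
           \<bar>((avg_op M \<Omega> \<rho>) ^^ n) u x - ((avg_op M \<Omega> \<rho>) ^^ n) u y\<bar> < \<epsilon>"
      proof (cases "K = {}")
        case True
        then show ?thesis by (intro exI[of _ 1]) auto
      next
        case False
        define A where "A = real_of_ereal (Linf_norm M \<Omega> u)"
        define k where "k = (INF z\<in>K. \<rho> z)"
        have gA: "good A u" "0 \<le> A" using good_base[OF u bd(3)] by (auto simp: A_def)
        have kk: "0 < k" "\<forall>z\<in>K. k \<le> \<rho> z" using inf_pos[OF K False] unfolding k_def by auto
        define \<tau> where "\<tau> = k * (\<epsilon>/(C0*A+1)) powr (1/\<delta>)"
        have p: "0 < C0*A+1" using C0p gA by (simp add: add_nonneg_pos)
        have tp: "0 < \<tau>" unfolding \<tau>_def using kk e p by simp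
        have "uniformly_continuous_on K \<rho>"
          by (rule compact_uniformly_continuous[OF continuous_on_subset[OF rc K(2)] K(1)])
        then obtain d0 where d0: "0 < d0" and uc: "\<forall>x\<in>K. \<forall>x'\<in>K. dist x' x < d0 \<longrightarrow> dist (\<rho> x') (\<rho> x) < \<tau>/2"
          unfolding uniformly_continuous_on_def using tp by (meson half_gt_zero)
        show ?thesis
        proof (intro exI[of _ "min (\<tau>/2) d0"] conjI allI impI ballI)
          show "0 < min (\<tau>/2) d0" using tp d0 by simp
          fix n :: nat and x y assume n: "n \<ge> 1" and xy: "x \<in> K" "y \<in> K" and dxy: "dist x y < min (\<tau>/2) d0"
          have gv: "good A ((avg_op M \<Omega> \<rho> ^^ (n - 1)) u)" by (rule good_iter[OF gA])
          have "dist (\<rho> x) (\<rho> y) < \<tau>/2" using uc xy dxy by auto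
          then have sl: "dist x y + \<bar>\<rho> x - \<rho> y\<bar> < \<tau>" using dxy by (simp add: dist_real_def)
          have "\<bar>((avg_op M \<Omega> \<rho>) ^^ n) u x - ((avg_op M \<Omega> \<rho>) ^^ n) u y\<bar>
              \<le> C0 * A * ((dist x y + \<bar>\<rho> x - \<rho> y\<bar>)/k) powr \<delta>"
            unfolding iter[OF n] using kk xy by (intro avg_lip[OF gv gA(2)]) auto
          also have "\<dots> < \<epsilon>"
            using sl kk e gA C0p dpos by (intro small_bound) (auto simp: \<tau>_def)
          finally show "\<bar>((avg_op M \<Omega> \<rho>) ^^ n) u x - ((avg_op M \<Omega> \<rho>) ^^ n) u y\<bar> < \<epsilon>" .
        qed
      qed
    qed
    from P1 P2 show "(\<forall>u K x y n. u \<in> borel_measurable M \<and> Linf_norm M \<Omega> u < \<infinity> \<and>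
        compact K \<and> K \<subseteq> \<Omega> \<and> x \<in> K \<and> y \<in> K \<and> n \<ge> 1 \<longrightarrow>
        \<bar>((avg_op M \<Omega> \<rho>) ^^ n) u x - ((avg_op M \<Omega> \<rho>) ^^ n) u y\<bar>
          \<le> real_of_ereal (Linf_norm M \<Omega> u) *
             (2 * C0 * (INF z\<in>K. \<rho> z) powr (-\<delta>) * (omega_hat (diameter \<Omega>) \<omega> (dist x y)) powr \<delta>)) \<and> (\<forall>u K. u \<in> borel_measurable M \<and> Linf_norm M \<Omega> u < \<infinity> \<and> compact K \<and> K \<subseteq> \<Omega> \<longrightarrow>
        (\<forall>\<epsilon>>0. \<exists>\<eta>>0. \<forall>n\<ge>1. \<forall>x\<in>K. \<forall>y\<in>K. dist x y < \<eta> \<longrightarrow>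
           \<bar>((avg_op M \<Omega> \<rho>) ^^ n) u x - ((avg_op M \<Omega> \<rho>) ^^ n) u y\<bar> < \<epsilon>))" by blast
  qed
qed

end
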